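(* Let $M=(W,\bm{\Box},V)$ be a monotonic and transitive neighborhood model, $\Sigma$ a set of formulas closed under subformulas, and $M^{T}_f$ the transitive filtration of $M$ through $\Sigma$. Then its supplementation $M^{T\#}_f=(W_f,\bm{\Box}^{T\#}_f,V_f)$ is a filtration of $M$ through $\Sigma$, i.e. $\bm{\Box}^{T\#}_f\widetilde{|\varphi|}_M=\widetilde{|\Box\varphi|}_M$ for every formula $\Box\varphi\in\Sigma$.
   Context: A neighborhood model is $M=(W,\bm{\Box},V)$ with $W\neq\varnothing$, $\bm{\Box}:\mathcal P(W)\to\mathcal P(W)$, $V:Var\to\mathcal P(W)$; truth sets: $|p|_M=V(p)$, $|\neg\varphi|_M=W\setminus|\varphi|_M$, $|\varphi\wedge\psi|_M=|\varphi|_M\cap|\psi|_M$, $|\Box\varphi|_M=\bm{\Box}|\varphi|_M$. $M$ is transitive if $\bm{\Box}X\subseteq\bm{\Box}\bm{\Box}X$ for all $X$, monotonic if $X\subseteq Y$ implies $\bm{\Box}X\subseteq\bm{\Box}Y$. For $\Sigma$ closed under subformulas, $w\sim v$ iff $w,v$ satisfy the same formulas of $\Sigma$; $\widetilde w$ is the class of $w$, $W_f=\{\widetilde w:w\in W\}$, $\widetilde X=\{\widetilde w:w\in X\}$, $V_f(p)=\widetilde{|p|}_M$. A filtration of $M$ through $\Sigma$ is a model $(W_f,\bm{\Box}_f,V_f)$ with $\bm{\Box}_f\widetilde{|\varphi|}_M=\widetilde{|\Box\varphi|}_M$ whenever $\Box\varphi\in\Sigma$. The minimal filtration has $\bm{\Box}^{-}_fX=\widetilde{|\Box\varphi|}_M$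 if $X=\widetilde{|\varphi|}_M$ for some formula $\Box\varphi\in\Sigma$, and $\varnothing$ otherwise. For a function $\bm{\Box}':\mathcal P(U)\to\mathcal P(U)$, $\widehat{\bm{\Box}'}X=X$ if $X=\bm{\Box}'Y$ for some $Y$, and $\varnothing$ otherwise. The transitive filtration has $\bm{\Box}^{T}_fX=\bm{\Box}^{-}_fX\cup\widehat{\bm{\Box}^{-}_f}X$. The supplementation of a function $\bm{\Box}'$ is $\bm{\Box}'^{\#}X=\bigcup\{\bm{\Box}'Y:Y\subseteq X\}$; $\bm{\Box}^{T\#}_f$ denotes the supplementation of $\bm{\Box}^{T}_f$. *)

theory Defs
  imports Main
begin

datatype 'v fm = Var 'v | Neg "'v fm" | Conj "'v fm" "'v fm" | Box "'v fm"

fun subfms :: "'v fm \<Rightarrow> 'v fm set" where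
  "subfms (Var p) = {Var p}"
| "subfms (Neg a) = insert (Neg a) (subfms a)"
| "subfms (Conj a b) = insert (Conj a b) (subfms a \<union> subfms b)"
| "subfms (Box a) = insert (Box a) (subfms a)"

definition sub_closed :: "'v fm set \<Rightarrow> bool" where
  "sub_closed S \<longleftrightarrow> (\<forall>a\<in>S. subfms a \<subseteq> S)"

definition nbhd_model :: "'w set \<Rightarrow> ('w set \<Rightarrow> 'w set) \<Rightarrow> ('v \<Rightarrow> 'w set) \<Rightarrow> bool" where
  "nbhd_model W B V \<longleftrightarrow> W \<noteq> {} \<and> (\<forall>X. X \<subseteq> W \<longrightarrow> B X \<subseteq> W) \<and> (\<forall>p. V p \<subseteq> W)"

fun tset :: "'w set \<Rightarrow> ('w set \<Rightarrow> 'w set) \<Rightarrow> ('v \<Rightarrow> 'w set) \<Rightarrow> 'v fm \<Rightarrow> 'w set" where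
  "tset W B V (Var p) = V p"
| "tset W B V (Neg a) = W - tset W B V a"
| "tset W B V (Conj a b) = tset W B V a \<inter> tset W B V b"
| "tset W B V (Box a) = B (tset W B V a)"

definition transitive_nm :: "'w set \<Rightarrow> ('w set \<Rightarrow> 'w set) \<Rightarrow> bool" where
  "transitive_nm W B \<longleftrightarrow> (\<forall>X. X \<subseteq> W \<longrightarrow> B X \<subseteq> B (B X))"

definition monotonic_nm :: "'w set \<Rightarrow> ('w set \<Rightarrow> 'w set) \<Rightarrow> bool" where
  "monotonic_nm W B \<longleftrightarrow> (\<forall>X Y. X \<subseteq> Y \<and> Y \<subseteq> W \<longrightarrow> B X \<subseteq> B Y)"

definition cls :: "'w set \<Rightarrow> ('w set \<Rightarrow> 'w set) \<Rightarrow> ('v \<Rightarrow> 'w set) \<Rightarrow> 'v fm set \<Rightarrow> 'w \<Rightarrow> 'w set" where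
  "cls W B V S w = {u \<in> W. \<forall>a\<in>S. (w \<in> tset W B V a \<longleftrightarrow> u \<in> tset W B V a)}"

definition Wf :: "'w set \<Rightarrow> ('w set \<Rightarrow> 'w set) \<Rightarrow> ('v \<Rightarrow> 'w set) \<Rightarrow> 'v fm set \<Rightarrow> 'w set set" where
  "Wf W B V S = cls W B V S ` W"

definition tilde :: "'w set \<Rightarrow> ('w set \<Rightarrow> 'w set) \<Rightarrow> ('v \<Rightarrow> 'w set) \<Rightarrow> 'v fm set \<Rightarrow> 'w set \<Rightarrow> 'w set set" where
  "tilde W B V S X = cls W B V S ` X"

definition Vf :: "'w set \<Rightarrow> ('w set \<Rightarrow> 'w set) \<Rightarrow> ('v \<Rightarrow> 'w set) \<Rightarrow> 'v fm set \<Rightarrow> 'v \<Rightarrow> 'w set set" where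
  "Vf W B V S p = tilde W B V S (V p)"

definition box_min :: "'w set \<Rightarrow> ('w set \<Rightarrow> 'w set) \<Rightarrow> ('v \<Rightarrow> 'w set) \<Rightarrow> 'v fm set \<Rightarrow> 'w set set \<Rightarrow> 'w set set" where
  "box_min W B V S X =
     (if \<exists>a. Box a \<in> S \<and> X = tilde W B V S (tset W B V a)
      then tilde W B V S (tset W B V (Box (SOME a. Box a \<in> S \<and> X = tilde W B V S (tset W B V a))))
      else {})"

definition hat :: "'u set \<Rightarrow> ('u set \<Rightarrow> 'u set) \<Rightarrow> 'u set \<Rightarrow> 'u set" where
  "hat U B' X = (if \<exists>Y. Y \<subseteq> U \<and> X = B' Y then X else {})"

definition box_trans :: "'w set \<Rightarrow> ('w set \<Rightarrow> 'w set) \<Rightarrow> ('v \<Rightarrow> 'w set) \<Rightarrow> 'v fm set \<Rightarrow> 'w set set \<Rightarrow> 'w set set" where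
  "box_trans W B V S X = box_min W B V S X \<union> hat (Wf W B V S) (box_min W B V S) X"

definition supp :: "'u set \<Rightarrow> ('u set \<Rightarrow> 'u set) \<Rightarrow> 'u set \<Rightarrow> 'u set" where
  "supp U B' X = \<Union>{B' Y | Y. Y \<subseteq> X}"

definition is_filtration :: "'w set \<Rightarrow> ('w set \<Rightarrow> 'w set) \<Rightarrow> ('v \<Rightarrow> 'w set) \<Rightarrow> 'v fm set \<Rightarrow> ('w set set \<Rightarrow> 'w set set) \<Rightarrow> bool" where
  "is_filtration W B V S Bf \<longleftrightarrow>
     (\<forall>a. Box a \<in> S \<longrightarrow> Bf (tilde W B V S (tset W B V a)) = tilde W B V S (tset W B V (Box a)))"

end

theory Submission
  imports Defs
begin

lemma tset_sub: "nbhd_model W B V \<Longrightarrow> tset W B V a \<subseteq> W"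
  by (induction a) (auto simp: nbhd_model_def)

lemma cls_self: "w \<in> W \<Longrightarrow> w \<in> cls W B V S w"
  by (simp add: cls_def)

lemma tilde_sub_imp:
  assumes "nbhd_model W B V" "b \<in> S" "X \<subseteq> W"
    and "tilde W B V S X \<subseteq> tilde W B V S (tset W B V b)"
  shows "X \<subseteq> tset W B V b"
proof
  fix w assume w: "w \<in> X"
  then have "cls W B V S w \<in> tilde W B V S (tset W B V b)"
    using assms(4) by (auto simp: tilde_def)
  then obtain u where u: "u \<in> tset W B V b" "cls W B V S w = cls W B V S u"
    by (auto simp: tilde_def)
  have "w \<in> cls W B V S u" using u(2) cls_self[of w W B V S] w assms(3) by auto
  then show "w \<in> tset W B V b" using u(1) assms(2) by (auto simp: cls_def)
qed

lemma self_subfms: "a \<in> subfms a"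
  by (cases a) auto

lemma sub_in: "sub_closed S \<Longrightarrow> Box a \<in> S \<Longrightarrow> a \<in> S"
  unfolding sub_closed_def using self_subfms[of a] by fastforce

lemma box_min_eq:
  assumes "nbhd_model W B V" "sub_closed S" "Box b \<in> S"
  shows "box_min W B V S (tilde W B V S (tset W B V b)) = tilde W B V S (tset W B V (Box b))"
proof -
  let ?P = "\<lambda>a. Box a \<in> S \<and> tilde W B V S (tset W B V b) = tilde W B V S (tset W B V a)"
  have ex: "\<exists>a. ?P a" using assms by blast
  define c where "c = (SOME a. ?P a)"
  have Pc: "?P c" unfolding c_def by (rule someI_ex[OF ex])
  have bS: "b \<in> S" and cS: "c \<in> S" using sub_in[OF assms(2)] assms(3) Pc by auto
  have "tset W B V b = tset W B V c"
    using tilde_sub_imp[OF assms(1) cS tset_sub[OF assms(1)]]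
      tilde_sub_imp[OF assms(1) bS tset_sub[OF assms(1)]] Pc by blast
  then show ?thesis using ex unfolding box_min_def c_def[symmetric] by simp
qed

lemma box_min_cases:
  assumes "nbhd_model W B V" "sub_closed S"
  shows "box_min W B V S X = {} \<or> (\<exists>b. Box b \<in> S \<and> X = tilde W B V S (tset W B V b)
      \<and> box_min W B V S X = tilde W B V S (tset W B V (Box b)))"
proof (cases "\<exists>a. Box a \<in> S \<and> X = tilde W B V S (tset W B V a)")
  case True
  then obtain b where "Box b \<in> S" "X = tilde W B V S (tset W B V b)" by blast
  then show ?thesis using box_min_eq[OF assms] by blast
next
  case False
  have "box_min W B V S X = {}" unfolding box_min_def using False by (rule if_not_P)
  then show ?thesis by simp
qed

theorem mainTheorem8:
  fixes W :: "'w set" and B :: "'w set \<Rightarrow> 'w set" and V :: "'v \<Rightarrow> 'w set" and S :: "'v fm set"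
  assumes "nbhd_model W B V"
    and "monotonic_nm W B"
    and "transitive_nm W B"
    and "sub_closed S"
  shows "is_filtration W B V S (supp (Wf W B V S) (box_trans W B V S))"
  unfolding is_filtration_def
proof (intro allI impI)
  fix a assume aS: "Box a \<in> S"
  have aS': "a \<in> S" using sub_in[OF assms(4) aS] .
  let ?t = "tset W B V" and ?T = "tilde W B V S"
  have tsub: "\<And>c. ?t c \<subseteq> W" using tset_sub[OF assms(1)] by blast
  have mono: "\<And>X Y. X \<subseteq> Y \<Longrightarrow> Y \<subseteq> W \<Longrightarrow> B X \<subseteq> B Y"
    using assms(2) unfolding monotonic_nm_def by blast
  have trans: "\<And>X. X \<subseteq> W \<Longrightarrow> B X \<subseteq> B (B X)"
    using assms(3) unfolding transitive_nm_def by blast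
  have bm: "box_min W B V S (?T (?t a)) = ?T (?t (Box a))"
    using box_min_eq[OF assms(1) assms(4) aS] .
  have "box_trans W B V S Y \<subseteq> ?T (?t (Box a))" if Y: "Y \<subseteq> ?T (?t a)" for Y
  proof -
    have 1: "box_min W B V S Y \<subseteq> ?T (?t (Box a))"
      using box_min_cases[OF assms(1) assms(4), of Y]
    proof
      assume "\<exists>b. Box b \<in> S \<and> Y = ?T (?t b) \<and> box_min W B V S Y = ?T (?t (Box b))"
      then obtain b where b: "Box b \<in> S" "Y = ?T (?t b)" "box_min W B V S Y = ?T (?t (Box b))"
        by blast
      have "?t b \<subseteq> ?t a" using tilde_sub_imp[OF assms(1) aS' tsub] Y b(2) by blast
      then have "B (?t b) \<subseteq> B (?t a)" using mono tsub by blast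
      then show ?thesis using b(3) by (auto simp: tilde_def)
    qed simp
    have 2: "hat (Wf W B V S) (box_min W B V S) Y \<subseteq> ?T (?t (Box a))"
    proof (cases "\<exists>Z. Z \<subseteq> Wf W B V S \<and> Y = box_min W B V S Z")
      case True
      then obtain Z where Z: "Y = box_min W B V S Z" by blast
      from box_min_cases[OF assms(1) assms(4), of Z] show ?thesis
      proof
        assume "box_min W B V S Z = {}" then show ?thesis using Z True by (simp add: hat_def)
      next
        assume "\<exists>c. Box c \<in> S \<and> Z = ?T (?t c) \<and> box_min W B V S Z = ?T (?t (Box c))"
        then obtain c where c: "Box c \<in> S" "box_min W B V S Z = ?T (?t (Box c))" by blast
        have "?t (Box c) \<subseteq> ?t a" using tilde_sub_imp[OF assms(1) aS' tsub] Y Z c(2) by metis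
        then have "B (?t c) \<subseteq> B (B (?t c))" "B (B (?t c)) \<subseteq> B (?t a)"
          using trans mono tsub by auto
        then have "?t (Box c) \<subseteq> ?t (Box a)" by simp
        then have "Y \<subseteq> ?T (?t (Box a))" using Z c(2) by (auto simp: tilde_def)
        then show ?thesis using True by (simp add: hat_def)
      qed
    next
      case False
      have "hat (Wf W B V S) (box_min W B V S) Y = {}" unfolding hat_def using False by (rule if_not_P)
      then show ?thesis by simp
    qed
    show ?thesis using 1 2 by (simp add: box_trans_def)
  qed
  then have le: "supp (Wf W B V S) (box_trans W B V S) (?T (?t a)) \<subseteq> ?T (?t (Box a))"
    unfolding supp_def by blast
  have "?T (?t (Box a)) \<subseteq> box_trans W B V S (?T (?t a))"
    using bm by (simp add: box_trans_def)
  then have ge: "?T (?t (Box a)) \<subseteq> supp (Wf W B V S) (box_trans W B V S) (?T (?t a))"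
    unfolding supp_def by blast
  show "supp (Wf W B V S) (box_trans W B V S) (?T (?t a)) = ?T (?t (Box a))"
    using le ge by blast
qed

end
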